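(* Let $n\ge3$ be odd, $d,R\in\mathbb{Q}$, $d\ne0$, $R$ not a square, $D=d^2-R$, $\zeta$ a primitive $n$th root of unity and $K=\mathbb{Q}(\sqrt R(\zeta-\zeta^{-1}))$. If $f_n=f_n(Z,d,R)$ has a zero in $\mathbb{Q}$, then the splitting field $L\subseteq\mathbb{C}$ of $f_n$ over $\mathbb{Q}$ equals $K$.
   Context: $f_n(Z,d,R)=\sum_{j=0}^{(n-1)/2}(-1)^j\frac{n}{n-j}\binom{n-j}{j}D^jZ^{n-2j}-2dD^{(n-1)/2}$, which equals $\sqrt D^{\,n}F_n(Z/\sqrt D)-2dD^{(n-1)/2}$ where $F_n(Z)=2T_n(Z/2)$ and $T_n$ is the Chebyshev polynomial of the first kind. *)

theory Defs
  imports Complex_Main "HOL-Computational_Algebra.Polynomial"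
begin

definition f_poly :: "nat \<Rightarrow> rat \<Rightarrow> rat \<Rightarrow> rat poly" where
  "f_poly n d R = (let D = d^2 - R in
     (\<Sum>j\<in>{0..(n - 1) div 2}.
        monom ((-1)^j * (of_nat n / of_nat (n - j)) * of_nat ((n - j) choose j) * D^j) (n - 2*j))
     - [: 2 * d * D^((n - 1) div 2) :])"

definition is_subfield_C :: "complex set \<Rightarrow> bool" where
  "is_subfield_C F \<longleftrightarrow> 0 \<in> F \<and> 1 \<in> F \<and>
     (\<forall>x\<in>F. \<forall>y\<in>F. x + y \<in> F \<and> x * y \<in> F) \<and>
     (\<forall>x\<in>F. - x \<in> F \<and> inverse x \<in> F)"

definition field_gen :: "complex set \<Rightarrow> complex set" where
  "field_gen S = \<Inter>{F. is_subfield_C F \<and> S \<subseteq> F}"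

definition splitting_field_C :: "rat poly \<Rightarrow> complex set" where
  "splitting_field_C p = field_gen {z. poly (map_poly of_rat p) z = 0}"

end

theory Submission
  imports Defs
begin

fun cc :: "nat \<Rightarrow> nat \<Rightarrow> nat" where
  "cc 0 j = (if j = 0 then 2 else 0)"
| "cc (Suc 0) j = (if j = 0 then 1 else 0)"
| "cc (Suc (Suc n)) 0 = 1"
| "cc (Suc (Suc n)) (Suc j) = cc (Suc n) (Suc j) + cc n j"

lemma cc_zero: "cc n j \<noteq> 0 \<Longrightarrow> 2*j \<le> n"
  by (induction n j rule: cc.induct) (auto split: if_splits)

lemma cc_Suc_0 [simp]: "cc (Suc n) 0 = 1" by (cases n) auto

definition LL :: "nat \<Rightarrow> complex \<Rightarrow> complex \<Rightarrow> complex" where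
  "LL n s e = (\<Sum>j\<le>n. of_nat (cc n j) * (-e)^j * s^(n-2*j))"

lemma LL_rec: "LL (Suc (Suc n)) s e = s * LL (Suc n) s e - e * LL n s e"
proof -
  have "LL (Suc(Suc n)) s e = s^(n+2) + (\<Sum>j\<le>Suc n. of_nat (cc (Suc(Suc n)) (Suc j)) * (-e)^(Suc j) * s^(n-2*j))"
    unfolding LL_def by (subst sum.atMost_Suc_shift) simp
  also have "\<dots> = s^(n+2) + (\<Sum>j\<le>Suc n. of_nat (cc (Suc n) (Suc j)) * (-e)^(Suc j) * s^(n-2*j))
       + (\<Sum>j\<le>Suc n. of_nat (cc n j) * (-e)^(Suc j) * s^(n-2*j))"
  proof -
    have "(\<Sum>j\<le>Suc n. of_nat (cc (Suc(Suc n)) (Suc j)) * (-e)^(Suc j) * s^(n-2*j)) = (\<Sum>j\<le>Suc n. of_nat (cc (Suc n) (Suc j)) * (-e)^(Suc j) * s^(n-2*j))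
       + (\<Sum>j\<le>Suc n. of_nat (cc n j) * (-e)^(Suc j) * s^(n-2*j))"
      by (simp add: sum.distrib[symmetric] distrib_right del: mult_minus_left power_Suc) 
    then show ?thesis by (simp only: add.assoc)
  qed
  also have "(\<Sum>j\<le>Suc n. of_nat (cc n j) * (-e)^(Suc j) * s^(n-2*j)) = - e * LL n s e"
  proof -
    have "cc n (Suc n) = 0" using cc_zero[of n "Suc n"] by auto
    then show ?thesis unfolding LL_def by (simp add: sum_distrib_left algebra_simps)
  qed
  also have "(\<Sum>j\<le>Suc n. of_nat (cc (Suc n) (Suc j)) * (-e)^(Suc j) * s^(n-2*j))
      = s * (\<Sum>j\<le>n. of_nat (cc (Suc n) (Suc j)) * (-e)^(Suc j) * s^(Suc n - 2*Suc j))"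
  proof -
    have "cc (Suc n) (Suc (Suc n)) = 0" using cc_zero[of "Suc n" "Suc (Suc n)"] by auto
    have T: "of_nat (cc (Suc n) (Suc j)) * (-e)^(Suc j) * s^(n-2*j)
        = s * (of_nat (cc (Suc n) (Suc j)) * (-e)^(Suc j) * s^(Suc n - 2*Suc j))" for j
    proof (cases "cc (Suc n) (Suc j) = 0")
      case False
      then have "2 * Suc j \<le> Suc n" by (rule cc_zero)
      then have "n - 2*j = Suc (Suc n - 2*Suc j)" by auto
      then show ?thesis by (simp only: power_Suc mult_ac)
    qed simp
    have "(\<Sum>j\<le>Suc n. of_nat (cc (Suc n) (Suc j)) * (-e)^(Suc j) * s^(n-2*j))
       = (\<Sum>j\<le>n. of_nat (cc (Suc n) (Suc j)) * (-e)^(Suc j) * s^(n-2*j))"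
      using \<open>cc (Suc n) (Suc (Suc n)) = 0\<close> by simp
    also have "\<dots> = (\<Sum>j\<le>n. s * (of_nat (cc (Suc n) (Suc j)) * (-e)^(Suc j) * s^(Suc n - 2*Suc j)))"
      by (rule sum.cong[OF refl T])
    also have "\<dots> = s * (\<Sum>j\<le>n. of_nat (cc (Suc n) (Suc j)) * (-e)^(Suc j) * s^(Suc n - 2*Suc j))"
      by (simp add: sum_distrib_left)
    finally show ?thesis .
  qed
  also have "s * LL (Suc n) s e = s^(n+2) + s * (\<Sum>j\<le>n. of_nat (cc (Suc n) (Suc j)) * (-e)^(Suc j) * s^(Suc n - 2*Suc j))"
    unfolding LL_def by (subst sum.atMost_Suc_shift) (simp add: algebra_simps)
  ultimately show ?thesis by (simp add: algebra_simps)
qed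

lemma LL_eq: "LL n (x+y) (x*y) = x^n + y^n"
proof (induction n rule: less_induct)
  case (less n)
  show ?case
  proof (cases n)
    case 0 then show ?thesis by (simp add: LL_def)
  next
    case (Suc k) note k = this
    show ?thesis
    proof (cases k)
      case 0 then show ?thesis using k by (simp add: LL_def)
    next
      case (Suc m)
      then show ?thesis using k LL_rec[of m "x+y" "x*y"] less[of m] less[of "Suc m"]
        by (simp add: algebra_simps)
    qed
  qed
qed

lemma binom_rel: "(Suc j) * (m choose (Suc j)) = (m - j) * (m choose j)"
  by (metis binomial_absorption binomial_absorb_comp)

lemma cc_formula: "n \<ge> 1 \<Longrightarrow> (of_nat (cc n j) :: rat) = of_nat n / of_nat (n-j) * of_nat ((n-j) choose j)"
proof (induction n j rule: cc.induct)
  case (1 j) then show ?case by simp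
next
  case (2 j) then show ?case by auto
next
  case (3 n) then show ?case by simp
next
  case (4 n j)
  show ?case
  proof (cases "n = 0")
    case True then show ?thesis by (cases j) auto
  next
    case False note nz = this
    then have IH1: "(of_nat (cc (Suc n) (Suc j)) :: rat) = of_nat (Suc n) / of_nat (Suc n - Suc j) * of_nat ((Suc n - Suc j) choose Suc j)"
      and IH2: "(of_nat (cc n j) :: rat) = of_nat n / of_nat (n-j) * of_nat ((n-j) choose j)"
      using 4 by auto
    show ?thesis
    proof (cases "j < n")
      case True
      define m where "m = n - j"
      have nm: "n = m + j" "m \<ge> 1" using True m_def by auto
      define a where "a = (m choose j)"
      define b where "b = (m choose Suc j)"
      have rel: "(of_nat (Suc j) :: rat) * of_nat b = (of_nat m - of_nat j) * of_nat a"
      proof (cases "j \<le> m")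
        case True
        then show ?thesis using binom_rel[of j m] unfolding a_def b_def
          by (metis of_nat_diff of_nat_mult)
      next
        case False
        then show ?thesis unfolding a_def b_def by (simp add: binomial_eq_0)
      qed
      have "(of_nat (cc (Suc (Suc n)) (Suc j)) :: rat) = of_nat (Suc n) / of_nat m * of_nat b + of_nat n / of_nat m * of_nat a"
        using IH1 IH2 by (simp add: m_def a_def b_def)
      also have "\<dots> = of_nat (Suc (Suc n)) / of_nat (Suc m) * (of_nat a + of_nat b)"
      proof -
        have rel2: "(of_nat (Suc j) * of_nat b) * of_nat m = ((of_nat m - of_nat j) * of_nat a) * (of_nat m :: rat)"
          using rel by simp
        show ?thesis using rel2 nm by (simp add: field_simps)
      qed
      also have "\<dots> = of_nat (Suc (Suc n)) / of_nat (Suc (Suc n) - Suc j) * of_nat ((Suc (Suc n) - Suc j) choose Suc j)"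
        using nm by (simp add: a_def b_def Suc_diff_le)
      finally show ?thesis .
    next
      case False
      then show ?thesis using IH1 IH2 False nz
        by (cases "j = n") (auto simp: binomial_eq_0)
    qed
  qed
qed


lemma mp_diff: "map_poly (of_rat::rat\<Rightarrow>complex) (p - q) = map_poly of_rat p - map_poly of_rat q"
  by (rule poly_eqI) (simp add: coeff_map_poly of_rat_diff)

lemma mp_add: "map_poly (of_rat::rat\<Rightarrow>complex) (p + q) = map_poly of_rat p + map_poly of_rat q"
  by (rule poly_eqI) (simp add: coeff_map_poly of_rat_add)

lemma mp_sum: "map_poly (of_rat::rat\<Rightarrow>complex) (\<Sum>j\<in>A. f j) = (\<Sum>j\<in>A. map_poly of_rat (f j))"
  by (induction A rule: infinite_finite_induct) (simp_all add: mp_add)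

lemma poly_mp_of_rat: "poly (map_poly (of_rat::rat\<Rightarrow>complex) p) (of_rat x) = of_rat (poly p x)"
  by (induction p) (simp_all add: map_poly_pCons of_rat_add of_rat_mult)

lemma poly_f:
  fixes x y :: complex
  assumes "odd n" "x * y = of_rat (d^2 - R)"
  shows "poly (map_poly of_rat (f_poly n d R)) (x+y) = x^n + y^n - of_rat (2*d*(d^2-R)^((n-1) div 2))"
proof -
  define D where "D = d^2 - R"
  define m where "m = (n - 1) div 2"
  have n1: "n \<ge> 1" using assms(1) by (cases n) auto
  have "map_poly (of_rat::rat\<Rightarrow>complex) (f_poly n d R) =
     (\<Sum>j\<in>{0..m}. monom (of_rat ((-1)^j * (of_nat n / of_nat (n - j)) * of_nat ((n - j) choose j) * D^j)) (n - 2*j))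
     - [: of_rat (2 * d * D^m) :]"
    unfolding f_poly_def Let_def D_def[symmetric] m_def[symmetric]
    by (simp add: mp_diff mp_sum map_poly_monom map_poly_pCons)
  then have "poly (map_poly of_rat (f_poly n d R)) (x+y) =
     (\<Sum>j\<in>{0..m}. of_rat ((-1)^j * (of_nat n / of_nat (n - j)) * of_nat ((n - j) choose j) * D^j) * (x+y)^(n - 2*j))
     - of_rat (2 * d * D^m)"
    by (simp add: poly_sum poly_monom)
  also have "(\<Sum>j\<in>{0..m}. of_rat ((-1)^j * (of_nat n / of_nat (n - j)) * of_nat ((n - j) choose j) * D^j) * (x+y)^(n - 2*j))
     = (\<Sum>j\<in>{0..m}. of_nat (cc n j) * (- (x*y))^j * (x+y)^(n - 2*j))"
  proof (rule sum.cong[OF refl])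
    fix j
    have h1: "(-1)^j * (of_nat n / of_nat (n - j)) * of_nat ((n - j) choose j) * D^j = (-1)^j * of_nat (cc n j) * D^j"
      by (simp only: cc_formula[OF n1, of j] mult.assoc)
    have h2: "(of_rat ((-1)^j * of_nat (cc n j) * D^j) :: complex) = of_nat (cc n j) * (- of_rat D)^j"
      by (simp only: of_rat_mult of_rat_power of_rat_minus of_rat_1 of_rat_of_nat_eq power_minus[of "of_rat D"]) (simp only: mult_ac)
    have h3: "x * y = of_rat D" using assms(2) unfolding D_def .
    show "of_rat ((-1)^j * (of_nat n / of_nat (n - j)) * of_nat ((n - j) choose j) * D^j) * (x+y)^(n - 2*j)
      = of_nat (cc n j) * (- (x*y))^j * (x+y)^(n - 2*j)"
      by (simp only: h1 h2 h3)
  qed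
  also have "\<dots> = LL n (x+y) (x*y)"
    unfolding LL_def
  proof (rule sum.mono_neutral_left)
    show "{0..m} \<subseteq> {..n}" unfolding m_def by auto
    show "\<forall>i\<in>{..n} - {0..m}. of_nat (cc n i) * (- (x * y)) ^ i * (x + y) ^ (n - 2 * i) = 0"
    proof
      fix i assume "i \<in> {..n} - {0..m}"
      then have "\<not> 2*i \<le> n" using assms(1) unfolding m_def by (auto elim!: oddE)
      then have "cc n i = 0" using cc_zero by blast
      then show "of_nat (cc n i) * (- (x * y)) ^ i * (x + y) ^ (n - 2 * i) = 0" by simp
    qed
  qed simp
  also have "\<dots> = x^n + y^n" by (rule LL_eq)
  finally show ?thesis unfolding D_def m_def .
qed

lemma sf_basic:
  assumes "is_subfield_C F"
  shows "0 \<in> F" "1 \<in> F" "x \<in> F \<Longrightarrow> y \<in> F \<Longrightarrow> x + y \<in> F" "x \<in> F \<Longrightarrow> y \<in> F \<Longrightarrow> x * y \<in> F"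
    "x \<in> F \<Longrightarrow> - x \<in> F" "x \<in> F \<Longrightarrow> inverse x \<in> F"
  using assms unfolding is_subfield_C_def by auto

lemma sf_diff: "is_subfield_C F \<Longrightarrow> x \<in> F \<Longrightarrow> y \<in> F \<Longrightarrow> x - y \<in> F"
  using sf_basic[of F] by (metis diff_conv_add_uminus)

lemma sf_div: "is_subfield_C F \<Longrightarrow> x \<in> F \<Longrightarrow> y \<in> F \<Longrightarrow> x / y \<in> F"
  using sf_basic[of F] by (metis divide_inverse)

lemma sf_pow: "is_subfield_C F \<Longrightarrow> x \<in> F \<Longrightarrow> x ^ k \<in> F"
  by (induction k) (simp_all add: sf_basic)

lemma sf_nat: "is_subfield_C F \<Longrightarrow> of_nat k \<in> F"
  by (induction k) (simp_all add: sf_basic)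

lemma sf_int: "is_subfield_C F \<Longrightarrow> of_int k \<in> F"
proof (cases k rule: int_cases)
  case (nonneg n)
  assume "is_subfield_C F" then show ?thesis using sf_nat[of F n] nonneg by simp
next
  case (neg n)
  assume F: "is_subfield_C F"
  have "- of_nat (Suc n) \<in> F" using sf_nat[OF F, of "Suc n"] sf_basic(5)[OF F] by blast
  then show ?thesis using neg by simp
qed

lemma sf_rat: "is_subfield_C F \<Longrightarrow> x \<in> \<rat> \<Longrightarrow> x \<in> F"
  by (erule Rats_cases') (simp add: sf_div sf_int)

lemma field_gen_sf: "is_subfield_C (field_gen S)"
  unfolding field_gen_def is_subfield_C_def by auto

lemma field_gen_sub: "S \<subseteq> field_gen S"
  unfolding field_gen_def by auto

lemma field_gen_least: "is_subfield_C F \<Longrightarrow> S \<subseteq> F \<Longrightarrow> field_gen S \<subseteq> F"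
  unfolding field_gen_def by auto

lemma roots_unity_powers:
  fixes \<zeta> \<omega> :: complex
  assumes "n > 0" "\<zeta> ^ n = 1" "\<forall>k. 0 < k \<and> k < n \<longrightarrow> \<zeta> ^ k \<noteq> 1" "\<omega> ^ n = 1"
  shows "\<exists>k<n. \<omega> = \<zeta> ^ k"
proof -
  have z0: "\<zeta> \<noteq> 0" using assms(1,2) by (auto simp: power_0_left)
  have inj: "inj_on (\<lambda>k. \<zeta> ^ k) {..<n}"
  proof (rule inj_onI)
    fix i j assume ij: "i \<in> {..<n}" "j \<in> {..<n}" "\<zeta> ^ i = \<zeta> ^ j"
    show "i = j"
    proof (rule ccontr)
      assume "i \<noteq> j"
      then consider "i < j" | "j < i" by linarith
      then show False
      proof cases
        case 1
        then have "\<zeta> ^ j = \<zeta> ^ i * \<zeta> ^ (j - i)" by (simp add: power_add[symmetric])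
        then have "\<zeta> ^ (j - i) = 1" using ij z0 by simp
        then show False using assms(3) 1 ij by auto
      next
        case 2
        then have "\<zeta> ^ i = \<zeta> ^ j * \<zeta> ^ (i - j)" by (simp add: power_add[symmetric])
        then have "\<zeta> ^ (i - j) = 1" using ij z0 by simp
        then show False using assms(3) 2 ij by auto
      qed
    qed
  qed
  have sub: "(\<lambda>k. \<zeta> ^ k) ` {..<n} \<subseteq> {z. z ^ n = 1}"
    using assms(2) by (auto, metis mult.commute power_mult power_one)
  have "card ((\<lambda>k. \<zeta> ^ k) ` {..<n}) = card {z::complex. z ^ n = 1}"
    using card_image[OF inj] card_roots_unity_eq[OF assms(1)] by simp
  then have "(\<lambda>k. \<zeta> ^ k) ` {..<n} = {z. z ^ n = 1}"
    using sub assms(1) by (intro card_subset_eq finite_roots_unity) auto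
  then show ?thesis using assms(4) by auto
qed

lemma pow_decomp:
  fixes a t :: complex
  assumes "a \<in> \<rat>" "t^2 \<in> \<rat>"
  shows "\<exists>A B. A \<in> \<rat> \<and> B \<in> \<rat> \<and> (a + t)^k = A + B * t \<and> (a - t)^k = A - B * t"
proof (induction k)
  case 0 show ?case by (rule exI[of _ 1], rule exI[of _ 0]) simp
next
  case (Suc k)
  then obtain A B where AB: "A \<in> \<rat>" "B \<in> \<rat>" "(a + t)^k = A + B * t" "(a - t)^k = A - B * t" by blast
  show ?case
  proof (intro exI conjI)
    show "A * a + B * t^2 \<in> \<rat>" using AB assms by simp
    show "A + B * a \<in> \<rat>" using AB assms by simp
    show "(a + t) ^ Suc k = A * a + B * t^2 + (A + B * a) * t"
      by (simp only: power_Suc AB(3) AB(4)) (simp add: algebra_simps power2_eq_square)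
    show "(a - t) ^ Suc k = A * a + B * t^2 - (A + B * a) * t"
      by (simp only: power_Suc AB(3) AB(4)) (simp add: algebra_simps power2_eq_square)
  qed
qed


lemma K_members:
  fixes \<zeta> c :: complex and K :: "complex set"
  assumes K: "is_subfield_C K" and z0: "\<zeta> \<noteq> 0" and odd: "odd n" and zn: "\<zeta> ^ n = 1"
    and alpha: "c * (\<zeta> - inverse \<zeta>) \<in> K" and c2: "c^2 \<in> \<rat>" and c0: "c \<noteq> 0"
    and om: "\<omega> = \<zeta> ^ k"
  shows "\<omega> + inverse \<omega> \<in> K \<and> c * (\<omega> - inverse \<omega>) \<in> K"
proof -
  define \<alpha> where "\<alpha> = c * (\<zeta> - inverse \<zeta>)"
  define G where "G j = \<zeta>^(2*j) + inverse (\<zeta>^(2*j))" for j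
  define E where "E j = c * (\<zeta>^(2*j+1) - inverse (\<zeta>^(2*j+1)))" for j
  have c2K: "c^2 \<in> K" using sf_rat[OF K c2] .
  have c2ne: "c^2 \<noteq> 0" using c0 by simp
  have g2: "G 1 = \<alpha>^2 / c^2 + 2"
    unfolding G_def \<alpha>_def using z0 c0 by (simp add: field_simps power2_eq_square)
  have aK: "\<alpha> \<in> K" using alpha unfolding \<alpha>_def .
  have two: "(2::complex) \<in> K" using sf_nat[OF K, of 2] by simp
  have G1: "G 1 \<in> K" unfolding g2
    by (intro sf_basic(3)[OF K] sf_div[OF K] sf_pow[OF K] aK c2K two)
  have Grec: "G (j+2) = G 1 * G (j+1) - G j" for j
    unfolding G_def using z0 by (simp add: field_simps power_add power_mult power2_eq_square)
  have Erec: "E (j+2) = G 1 * E (j+1) - E j" for j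
    unfolding G_def E_def using z0 by (simp add: field_simps power_add power_mult power2_eq_square)
  have E0: "E 0 = \<alpha>" unfolding E_def \<alpha>_def by simp
  have E1: "E 1 = (G 1 + 1) * \<alpha>"
    unfolding E_def G_def \<alpha>_def using z0 by (simp add: field_simps power2_eq_square power3_eq_cube)
  have GE: "G j \<in> K \<and> G (j+1) \<in> K \<and> E j \<in> K \<and> E (j+1) \<in> K" for j
  proof (induction j)
    case 0
    have "G 0 = 2" unfolding G_def by simp
    then show ?case using G1 two E0 E1 aK sf_basic[OF K]
      by (simp add: sf_basic(3)[OF K] sf_basic(4)[OF K])
  next
    case (Suc j)
    then show ?case using Grec[of j] Erec[of j] G1
      by (simp add: sf_diff[OF K] sf_basic(4)[OF K])
  qed
  have per: "\<zeta> ^ (k + n) = \<zeta> ^ k" using zn by (simp add: power_add)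
  show ?thesis
  proof (cases "even k")
    case True
    then obtain j where j: "k = 2*j" by blast
    from True odd obtain i where i: "k + n = 2*i+1" by (metis odd_add odd_two_times_div_two_succ)
    have "\<omega> + inverse \<omega> = G j" unfolding G_def om j ..
    moreover have "c * (\<omega> - inverse \<omega>) = E i" unfolding E_def om using per i by metis
    ultimately show ?thesis using GE by simp
  next
    case False
    then obtain j where j: "k = 2*j+1" by (metis odd_two_times_div_two_succ)
    from False odd obtain i where i: "k + n = 2*i" by (metis odd_add evenE)
    have "\<omega> + inverse \<omega> = G i" unfolding G_def om using per i by metis
    moreover have "c * (\<omega> - inverse \<omega>) = E j" unfolding E_def om j ..
    ultimately show ?thesis using GE by simp
  qed
qed


lemma quad_split: "\<exists>V W :: complex. V + W = Z \<and> V * W = Dc"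
proof -
  define sq where "sq = csqrt (Z^2 - 4*Dc)"
  have "sq^2 = Z^2 - 4*Dc" unfolding sq_def by simp
  then show ?thesis
    by (intro exI[of _ "(Z + sq)/2"] exI[of _ "(Z - sq)/2"])
       (simp add: field_simps power2_eq_square)
qed

theorem corollary1:
  fixes n :: nat and d R :: rat and \<zeta> :: complex
  assumes "n \<ge> 3" and "odd n"
    and "d \<noteq> 0"
    and "\<not> (\<exists>q::rat. q^2 = R)"
    and "\<zeta> ^ n = 1" and "\<forall>k. 0 < k \<and> k < n \<longrightarrow> \<zeta> ^ k \<noteq> 1"
    and "\<exists>z::rat. poly (f_poly n d R) z = 0"
  shows "splitting_field_C (f_poly n d R)
           = field_gen {csqrt (of_rat R) * (\<zeta> - inverse \<zeta>)}"
proof -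
  note odd = assms(2) and zn = assms(5) and prim = assms(6)
  define m where "m = (n - 1) div 2"
  have nm: "n = 2*m + 1" using odd unfolding m_def by (auto elim!: oddE)
  have n0: "n > 0" using nm by simp
  define F where "F = map_poly (of_rat::rat\<Rightarrow>complex) (f_poly n d R)"
  define Dq where "Dq = d^2 - R"
  define Dc where "Dc = (of_rat Dq :: complex)"
  define g where "g = (of_rat (2*d*Dq^m) :: complex)"
  define c where "c = csqrt (of_rat R)"
  define \<alpha> where "\<alpha> = c * (\<zeta> - inverse \<zeta>)"
  define K where "K = field_gen {\<alpha>}"
  define L where "L = splitting_field_C (f_poly n d R)"
  have L_def': "L = field_gen {z. poly F z = 0}" unfolding L_def splitting_field_C_def F_def ..
  have KS: "is_subfield_C K" unfolding K_def by (rule field_gen_sf)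
  have LS: "is_subfield_C L" unfolding L_def' by (rule field_gen_sf)
  have aK: "\<alpha> \<in> K" unfolding K_def using field_gen_sub by blast
  have R0: "R \<noteq> 0" using assms(4) by (metis power_zero_numeral)
  have Dq0: "Dq \<noteq> 0" using assms(4) unfolding Dq_def by auto
  have Dc0: "Dc \<noteq> 0" using Dq0 unfolding Dc_def by simp
  have c2: "c^2 = of_rat R" unfolding c_def by simp
  have c0: "c \<noteq> 0" using c2 R0 by (metis of_rat_eq_0_iff power_zero_numeral)
  have z0: "\<zeta> \<noteq> 0" using zn n0 by (auto simp: power_0_left)
  have key: "poly F (x + y) = x^n + y^n - g" if "x * y = Dc" for x y
    unfolding F_def g_def using poly_f[OF odd, of x y d R] that unfolding Dc_def Dq_def m_def by simp
  have gsq: "g^2 - 4 * Dc^n = (2 * Dc^m * c)^2"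
  proof -
    have e: "Dq^n = (Dq^m)^2 * Dq" unfolding nm
      by (metis power_add power_mult mult.commute power_one_right)
    have "(2*d*Dq^m)^2 - 4 * Dq^n = (2 * Dq^m)^2 * R"
      unfolding e by (simp add: Dq_def power2_eq_square algebra_simps)
    then have "(of_rat ((2*d*Dq^m)^2 - 4 * Dq^n) :: complex) = of_rat ((2 * Dq^m)^2 * R)" by simp
    then show ?thesis unfolding g_def Dc_def using c2
      by (simp add: of_rat_mult of_rat_power of_rat_diff power_mult_distrib)
  qed
  obtain z where z: "poly (f_poly n d R) z = 0" using assms(7) by blast
  define z0 where "z0 = (of_rat z :: complex)"
  have Fz0: "poly F z0 = 0" unfolding F_def z0_def poly_mp_of_rat z by simp
  obtain P Q where PQ: "P + Q = z0" "P * Q = Dc" using quad_split by blast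
  have P0: "P \<noteq> 0" and Q0: "Q \<noteq> 0" using PQ Dc0 by auto
  have PQn: "P^n + Q^n = g" using key[OF PQ(2)] Fz0 PQ(1) by simp
  define t where "t = P - Q"
  have t2: "t^2 = z0^2 - 4 * Dc" unfolding t_def PQ(1)[symmetric] PQ(2)[symmetric]
    by (simp add: power2_eq_square algebra_simps)
  have z0Q: "z0 \<in> \<rat>" unfolding z0_def by simp
  have DcQ: "Dc \<in> \<rat>" unfolding Dc_def by simp
  have t2Q: "(t/2)^2 \<in> \<rat>" using t2 z0Q DcQ by (simp add: power_divide)
  obtain A B where AB: "A \<in> \<rat>" "B \<in> \<rat>" "(z0/2 + t/2)^n = A + B * (t/2)" "(z0/2 - t/2)^n = A - B * (t/2)"
    using pow_decomp[of "z0/2" "t/2" n] z0Q t2Q by auto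
  have Pe: "P = z0/2 + t/2" and Qe: "Q = z0/2 - t/2" using PQ(1) unfolding t_def by (simp_all add: field_simps)
  have diff: "P^n - Q^n = B * t" using AB(3,4) unfolding Pe[symmetric] Qe[symmetric] by simp
  have "(P^n - Q^n)^2 = (2 * Dc^m * c)^2"
  proof -
    have "(P^n - Q^n)^2 = (P^n + Q^n)^2 - 4 * (P*Q)^n" by (simp add: power2_eq_square power_mult_distrib algebra_simps)
    then show ?thesis using gsq PQn PQ(2) by simp
  qed
  then have "P^n - Q^n = 2 * Dc^m * c \<or> P^n - Q^n = - (2 * Dc^m * c)"
    using power2_eq_iff by blast
  then obtain \<sigma> :: complex where sig: "\<sigma> = 1 \<or> \<sigma> = -1" "B * t = \<sigma> * (2 * Dc^m * c)"
    using diff by (metis mult_1 mult_minus1)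
  have sigQ: "\<sigma> \<in> \<rat>" using sig(1) by auto
  have rhs0: "\<sigma> * (2 * Dc^m * c) \<noteq> 0" using sig(1) Dc0 c0 by auto
  then have B0: "B \<noteq> 0" using sig(2) by auto
  define r where "r = \<sigma> * 2 * Dc^m / B"
  have rQ: "r \<in> \<rat>" unfolding r_def using sigQ DcQ AB(2) by simp
  have r0: "r \<noteq> 0" unfolding r_def using rhs0 B0 by auto
  have trc: "t = r * c" unfolding r_def using sig(2) B0 by (simp add: field_simps)
  have rootK: "P * \<omega> + Q * inverse \<omega> \<in> K" if omn: "\<omega> ^ n = 1" for \<omega>
  proof -
    obtain k where "k < n" "\<omega> = \<zeta> ^ k" using roots_unity_powers[OF n0 zn prim omn] by blast
    then have mem: "\<omega> + inverse \<omega> \<in> K \<and> c * (\<omega> - inverse \<omega>) \<in> K"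
      using K_members[OF KS z0 odd zn, of c] aK c2 c0 unfolding \<alpha>_def by simp
    have "P * \<omega> + Q * inverse \<omega> = z0/2 * (\<omega> + inverse \<omega>) + r/2 * (c * (\<omega> - inverse \<omega>))"
      unfolding Pe Qe trc by (simp add: algebra_simps)
    also have "\<dots> \<in> K"
    proof -
      have h1: "z0/2 \<in> K" using z0Q by (intro sf_rat[OF KS]) simp
      have h2: "r/2 \<in> K" using rQ by (intro sf_rat[OF KS]) simp
      show ?thesis using sf_basic(3)[OF KS sf_basic(4)[OF KS h1] sf_basic(4)[OF KS h2]] mem by blast
    qed
    finally show ?thesis .
  qed
  have rootsK: "{z. poly F z = 0} \<subseteq> K"
  proof
    fix Z assume "Z \<in> {z. poly F z = 0}"
    then have FZ: "poly F Z = 0" by simp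
    obtain V W where VW: "V + W = Z" "V * W = Dc" using quad_split by blast
    have V0: "V \<noteq> 0" using VW Dc0 by auto
    have VWn: "V^n + W^n = g" using key[OF VW(2)] FZ VW(1) by simp
    have "(V^n - P^n) * (V^n - Q^n) = 0"
    proof -
      have "(V^n - P^n) * (V^n - Q^n) = V^n * V^n - (P^n + Q^n) * V^n + (P*Q)^n"
        by (simp add: algebra_simps power_mult_distrib)
      also have "\<dots> = V^n * V^n - (V^n + W^n) * V^n + (V*W)^n" using PQn VWn PQ(2) VW(2) by simp
      also have "\<dots> = 0" by (simp add: algebra_simps power_mult_distrib)
      finally show ?thesis .
    qed
    then consider "V^n = P^n" | "V^n = Q^n" by auto
    then show "Z \<in> K"
    proof cases
      case 1
      define \<omega> where "\<omega> = V / P"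
      have om: "\<omega> ^ n = 1" unfolding \<omega>_def using 1 P0 by (simp add: power_divide)
      have "Z = P * \<omega> + Q * inverse \<omega>"
        unfolding \<omega>_def VW(1)[symmetric] using VW(2) PQ(2) P0 V0
        by (simp add: field_simps)
      then show ?thesis using rootK[OF om] by simp
    next
      case 2
      define \<omega> where "\<omega> = Q / V"
      have om: "\<omega> ^ n = 1" unfolding \<omega>_def using 2 Q0 V0 by (simp add: power_divide)
      have "Z = P * \<omega> + Q * inverse \<omega>"
        unfolding \<omega>_def VW(1)[symmetric] using VW(2) PQ(2) Q0 V0
        by (simp add: field_simps)
      then show ?thesis using rootK[OF om] by simp
    qed
  qed
  have LK: "L \<subseteq> K" unfolding L_def' by (rule field_gen_least[OF KS rootsK])
  have root1: "poly F (P * \<zeta> + Q * inverse \<zeta>) = 0"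
  proof -
    have "(P * \<zeta>) * (Q * inverse \<zeta>) = Dc" using PQ(2) z0 by (simp add: field_simps)
    from key[OF this] show ?thesis using PQn zn by (simp add: power_mult_distrib power_inverse)
  qed
  have root2: "poly F (P * inverse \<zeta> + Q * \<zeta>) = 0"
  proof -
    have "(P * inverse \<zeta>) * (Q * \<zeta>) = Dc" using PQ(2) z0 by (simp add: field_simps)
    from key[OF this] show ?thesis using PQn zn by (simp add: power_mult_distrib power_inverse)
  qed
  have rsub: "{z. poly F z = 0} \<subseteq> L" unfolding L_def' by (rule field_gen_sub)
  have "\<alpha> = ((P * \<zeta> + Q * inverse \<zeta>) - (P * inverse \<zeta> + Q * \<zeta>)) / r"
  proof -
    have "(P * \<zeta> + Q * inverse \<zeta>) - (P * inverse \<zeta> + Q * \<zeta>) = t * (\<zeta> - inverse \<zeta>)"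
      unfolding t_def by (simp add: algebra_simps)
    also have "\<dots> = r * \<alpha>" unfolding trc \<alpha>_def by simp
    finally show ?thesis using r0 by simp
  qed
  also have "\<dots> \<in> L"
  proof -
    have "P * \<zeta> + Q * inverse \<zeta> \<in> L" "P * inverse \<zeta> + Q * \<zeta> \<in> L" "r \<in> L"
      using root1 root2 rsub sf_rat[OF LS rQ] by auto
    then show ?thesis by (intro sf_div[OF LS] sf_diff[OF LS])
  qed
  finally have "\<alpha> \<in> L" .
  then have KL: "K \<subseteq> L" unfolding K_def by (intro field_gen_least[OF LS]) auto
  from LK KL show ?thesis unfolding L_def K_def \<alpha>_def c_def by blast
qed

end
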